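(* Let $\mathcal{H}$ be a complex Hilbert space and $T, S\in \mathcal{C}_2(\mathcal{H})$. Then: (i) $\big\|TT^* + T^*T\big\|_2 + \sup_{\varphi \in \mathbb{R}}\Big|{\rm tr}\big((e^{i\varphi}T)^2 + (e^{-i\varphi}T^* )^2\big)\Big| \leq 2\big(\|T\|^2_2 + |{\rm tr}(T^2)|\big)$; (ii) $\|TS\|^2_2 + \big|{\rm tr}\big((TS)^2\big)\big| \leq 4\min\Big\{\|T\|^2_2\big(\|S\|^2_2 + |{\rm tr}(S^2)|\big),\ \|S\|^2_2\big(\|T\|^2_2 + |{\rm tr}(T^2)|\big)\Big\}$.
   Context: $\mathcal{C}_2(\mathcal{H})$ denotes the class of Hilbert--Schmidt operators on $\mathcal{H}$, i.e. bounded operators $T$ with $\sum_i\|Te_i\|^2<\infty$ for an orthonormal basis $\{e_i\}$, with Hilbert--Schmidt norm $\|T\|_2=\big(\sum_i\|Te_i\|^2\big)^{1/2}$; ${\rm tr}$ denotes the trace. *)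

theory Defs
  imports "HOL-Analysis.Analysis"
begin

text \<open>Complex inner product spaces and complex Hilbert spaces (not in the distribution
library).  Convention: the inner product is conjugate-linear in the first and linear in
the second argument.\<close>

class complex_inner = real_normed_vector +
  fixes scaleC :: "complex \<Rightarrow> 'a \<Rightarrow> 'a" (infixr \<open>*\<^sub>C\<close> 75)
    and cinner :: "'a \<Rightarrow> 'a \<Rightarrow> complex"
  assumes scaleC_add_right: "a *\<^sub>C (x + y) = a *\<^sub>C x + a *\<^sub>C y"
    and scaleC_add_left: "(a + b) *\<^sub>C x = a *\<^sub>C x + b *\<^sub>C x"
    and scaleC_scaleC: "a *\<^sub>C (b *\<^sub>C x) = (a * b) *\<^sub>C x"
    and scaleC_one: "1 *\<^sub>C x = x"
    and scaleR_scaleC: "scaleR r x = complex_of_real r *\<^sub>C x"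
    and cinner_commute: "cinner x y = cnj (cinner y x)"
    and cinner_add_right: "cinner x (y + z) = cinner x y + cinner x z"
    and cinner_scaleC_right: "cinner x (c *\<^sub>C y) = c * cinner x y"
    and cinner_self_norm: "cinner x x = complex_of_real ((norm x)\<^sup>2)"

class chilbert_space = complex_inner + complete_space

definition cspan :: "'a::complex_inner set \<Rightarrow> 'a set" where
  "cspan B = {x. \<exists>F c. finite F \<and> F \<subseteq> B \<and> x = (\<Sum>b\<in>F. c b *\<^sub>C b)}"

definition is_onb :: "'a::complex_inner set \<Rightarrow> bool" where
  "is_onb B \<longleftrightarrow> (\<forall>e\<in>B. \<forall>f\<in>B. cinner e f = (if e = f then 1 else 0))
      \<and> closure (cspan B) = UNIV"

definition some_onb :: "'a::complex_inner set" where
  "some_onb = (SOME B. is_onb B)"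

definition bounded_clinear :: "('a::complex_inner \<Rightarrow> 'a) \<Rightarrow> bool" where
  "bounded_clinear T \<longleftrightarrow> bounded_linear T \<and> (\<forall>c x. T (c *\<^sub>C x) = c *\<^sub>C T x)"

definition adj :: "('a::complex_inner \<Rightarrow> 'a) \<Rightarrow> ('a \<Rightarrow> 'a)" where
  "adj T = (SOME S. \<forall>x y. cinner (T x) y = cinner x (S y))"

definition hilbert_schmidt :: "('a::complex_inner \<Rightarrow> 'a) \<Rightarrow> bool" where
  "hilbert_schmidt T \<longleftrightarrow> bounded_clinear T \<and>
     (\<exists>B. is_onb B \<and> (\<lambda>e. (norm (T e))\<^sup>2) summable_on B)"

text \<open>Hilbert--Schmidt norm (basis independent for HS operators).\<close>
definition hs_norm :: "('a::complex_inner \<Rightarrow> 'a) \<Rightarrow> real" where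
  "hs_norm T = sqrt (\<Sum>\<^sub>\<infinity>e\<in>some_onb. (norm (T e))\<^sup>2)"

text \<open>Trace (meaningful for trace-class operators, e.g. products of two HS operators).\<close>
definition trace :: "('a::complex_inner \<Rightarrow> 'a) \<Rightarrow> complex" where
  "trace A = (\<Sum>\<^sub>\<infinity>e\<in>some_onb. cinner e (A e))"

end

theory Submission
  imports Defs
begin


lemma cinner_add_left: "cinner (x+y) z = cinner x z + cinner (y::'a::complex_inner) z"
  by (metis cinner_commute cinner_add_right complex_cnj_add)

lemma cinner_scaleC_left: "cinner (c *\<^sub>C x) (y::'a::complex_inner) = cnj c * cinner x y"
  by (metis cinner_commute cinner_scaleC_right complex_cnj_mult)

lemma cinner_zero_right[simp]: "cinner (x::'a::complex_inner) 0 = 0"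
  using cinner_add_right[of x 0 0] by simp

lemma cinner_zero_left[simp]: "cinner 0 (x::'a::complex_inner) = 0"
  by (metis cinner_commute cinner_zero_right complex_cnj_zero)

lemma cinner_minus_right: "cinner (x::'a::complex_inner) (- y) = - cinner x y"
  using cinner_add_right[of x y "-y"] by (simp add: eq_neg_iff_add_eq_0 add.commute)

lemma cinner_minus_left: "cinner (- x) (y::'a::complex_inner) = - cinner x y"
  by (metis cinner_commute cinner_minus_right complex_cnj_minus)

lemma cinner_diff_right: "cinner (x::'a::complex_inner) (y - z) = cinner x y - cinner x z"
  by (metis cinner_add_right cinner_minus_right diff_conv_add_uminus)

lemma cinner_diff_left: "cinner (x - y) (z::'a::complex_inner) = cinner x z - cinner y z"
  by (metis cinner_add_left cinner_minus_left diff_conv_add_uminus)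

lemma cinner_sum_right: "cinner (x::'a::complex_inner) (sum f F) = (\<Sum>i\<in>F. cinner x (f i))"
  by (induction F rule: infinite_finite_induct) (auto simp: cinner_add_right)

lemma cinner_sum_left: "cinner (sum f F) (x::'a::complex_inner) = (\<Sum>i\<in>F. cinner (f i) x)"
  by (induction F rule: infinite_finite_induct) (auto simp: cinner_add_left)

lemma cinner_scaleR_right: "cinner (x::'a::complex_inner) (r *\<^sub>R y) = of_real r * cinner x y"
  by (simp add: scaleR_scaleC cinner_scaleC_right)

lemma cinner_scaleR_left: "cinner (r *\<^sub>R x) (y::'a::complex_inner) = of_real r * cinner x y"
  by (simp add: scaleR_scaleC cinner_scaleC_left)

lemma norm_sq_cinner: "(norm (x::'a::complex_inner))\<^sup>2 = Re (cinner x x)"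
  by (simp add: cinner_self_norm)

lemma scaleC_zero_left[simp]: "0 *\<^sub>C (x::'a::complex_inner) = 0"
  by (metis scaleR_scaleC scaleR_zero_left of_real_0)

lemma scaleC_zero_right[simp]: "c *\<^sub>C (0::'a::complex_inner) = 0"
  using scaleC_add_right[of c 0 0] by simp

lemma scaleC_minus_left: "(- c) *\<^sub>C (x::'a::complex_inner) = - (c *\<^sub>C x)"
  using scaleC_add_left[of c "-c" x] by (simp add: eq_neg_iff_add_eq_0 add.commute)

lemma scaleC_diff_left: "(c - d) *\<^sub>C (x::'a::complex_inner) = c *\<^sub>C x - d *\<^sub>C x"
  by (metis diff_conv_add_uminus scaleC_add_left scaleC_minus_left)

lemma scaleC_minus_right: "c *\<^sub>C (- x) = - (c *\<^sub>C (x::'a::complex_inner))"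
  using scaleC_add_right[of c x "-x"] by (simp add: eq_neg_iff_add_eq_0 add.commute)

lemma scaleC_diff_right: "c *\<^sub>C (x - y) = c *\<^sub>C x - c *\<^sub>C (y::'a::complex_inner)"
  by (metis diff_conv_add_uminus scaleC_add_right scaleC_minus_right)

lemma norm_scaleC: "norm (c *\<^sub>C (x::'a::complex_inner)) = cmod c * norm x"
proof -
  have "complex_of_real ((norm (c *\<^sub>C x))\<^sup>2) = cnj c * c * cinner x x"
    by (metis cinner_scaleC_left cinner_scaleC_right cinner_self_norm mult.assoc)
  also have "\<dots> = complex_of_real ((cmod c * norm x)\<^sup>2)"
    by (simp add: cinner_self_norm power_mult_distrib mult.commute flip: complex_norm_square)
  finally have "(norm (c *\<^sub>C x))\<^sup>2 = (cmod c * norm x)\<^sup>2" using of_real_eq_iff by blast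
  then show ?thesis by (simp add: power2_eq_iff_nonneg)
qed

lemma cinner_self_eq_0[simp]: "cinner x x = 0 \<longleftrightarrow> x = (0::'a::complex_inner)"
  by (simp add: cinner_self_norm)

lemma cinner_self_real: "cinner x x = complex_of_real (Re (cinner (x::'a::complex_inner) x))"
  by (simp add: cinner_self_norm)

lemma cauchy_schwarz: "cmod (cinner x y) \<le> norm x * norm (y::'a::complex_inner)"
proof (cases "y = 0")
  case True then show ?thesis by simp
next
  case False
  define n where "n = (norm y)\<^sup>2"
  have n: "n > 0" using False by (simp add: n_def)
  define a where "a = cinner y x"
  have yy: "cinner y y = of_real n" by (simp add: n_def cinner_self_norm)
  have xy: "cinner x y = cnj a" by (simp add: a_def cinner_commute[of x y])
  define t where "t = a / of_real n"
  define z where "z = x - t *\<^sub>C y"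
  have "cinner z z = cinner x x - t * cinner x y - cnj t * cinner y x + cnj t * t * cinner y y"
    unfolding z_def by (simp add: cinner_diff_left cinner_diff_right cinner_scaleC_left cinner_scaleC_right algebra_simps)
  also have "\<dots> = cinner x x - a * cnj a / of_real n"
    unfolding xy yy t_def a_def[symmetric] using n by (simp add: field_simps)
  also have "a * cnj a = of_real ((cmod a)\<^sup>2)" by (simp add: complex_norm_square[symmetric])
  finally have "cinner z z = of_real ((norm x)\<^sup>2 - (cmod a)\<^sup>2 / n)"
    by (simp add: cinner_self_norm)
  then have "Re (cinner z z) = (norm x)\<^sup>2 - (cmod a)\<^sup>2 / n" by simp
  moreover have "Re (cinner z z) \<ge> 0" by (simp add: cinner_self_norm)
  ultimately have "(cmod a)\<^sup>2 \<le> (norm x)\<^sup>2 * n" using n by (simp add: field_simps) (smt (verit) mult_nonneg_nonneg)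
  then have "(cmod a)\<^sup>2 \<le> (norm x * norm y)\<^sup>2" by (simp add: n_def power_mult_distrib)
  then have "cmod a \<le> norm x * norm y"
    by (meson mult_nonneg_nonneg norm_ge_zero power2_le_imp_le)
  then show ?thesis
    by (metis a_def cinner_commute complex_mod_cnj)
qed



definition orthonormal :: "'a::complex_inner set \<Rightarrow> bool" where
  "orthonormal B \<longleftrightarrow> (\<forall>e\<in>B. \<forall>f\<in>B. cinner e f = (if e = f then 1 else 0))"

lemma onb_orthonormal: "is_onb B \<Longrightarrow> orthonormal B"
  by (simp add: is_onb_def orthonormal_def)

lemma orthonormal_cinner_sum:
  assumes "orthonormal B" "finite F" "F \<subseteq> B" "e \<in> B"
  shows "cinner e (\<Sum>f\<in>F. c f *\<^sub>C f) = (if e \<in> F then c e else 0)"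
proof -
  have "cinner e (\<Sum>f\<in>F. c f *\<^sub>C f) = (\<Sum>f\<in>F. c f * cinner e f)"
    by (simp add: cinner_sum_right cinner_scaleC_right)
  also have "\<dots> = (\<Sum>f\<in>F. if e = f then c f else 0)"
    using assms by (intro sum.cong) (auto simp: orthonormal_def)
  also have "\<dots> = (if e \<in> F then c e else 0)"
    using assms(2) by (simp add: sum.delta)
  finally show ?thesis .
qed

lemma orthonormal_norm_sum:
  assumes "orthonormal B" "finite F" "F \<subseteq> B"
  shows "(norm (\<Sum>f\<in>F. c f *\<^sub>C f))\<^sup>2 = (\<Sum>f\<in>F. (cmod (c f))\<^sup>2)"
proof -
  have "cinner (\<Sum>f\<in>F. c f *\<^sub>C f) (\<Sum>f\<in>F. c f *\<^sub>C f)
      = (\<Sum>e\<in>F. cnj (c e) * cinner e (\<Sum>f\<in>F. c f *\<^sub>C f))"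
    by (simp add: cinner_sum_left cinner_scaleC_left)
  also have "\<dots> = (\<Sum>e\<in>F. cnj (c e) * c e)"
    using assms by (intro sum.cong refl) (metis orthonormal_cinner_sum subsetD)
  also have "\<dots> = of_real (\<Sum>f\<in>F. (cmod (c f))\<^sup>2)"
    by (simp add: mult.commute flip: complex_norm_square)
  finally show ?thesis
    by (metis cinner_self_norm of_real_eq_iff)
qed

lemma pythagoras:
  assumes "cinner u w = 0"
  shows "(norm (u + w))\<^sup>2 = (norm u)\<^sup>2 + (norm (w::'a::complex_inner))\<^sup>2"
proof -
  have "cinner w u = 0" using assms by (metis cinner_commute complex_cnj_zero)
  then have "cinner (u + w) (u + w) = cinner u u + cinner w w"
    using assms by (simp add: cinner_add_left cinner_add_right)
  then show ?thesis
    by (metis cinner_self_norm of_real_add of_real_eq_iff)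
qed

definition proj :: "'a::complex_inner set \<Rightarrow> 'a \<Rightarrow> 'a" where
  "proj F x = (\<Sum>e\<in>F. cinner e x *\<^sub>C e)"

lemma proj_orth:
  assumes "orthonormal B" "finite F" "F \<subseteq> B" "e \<in> F"
  shows "cinner e (x - proj F x) = 0"
  using assms by (simp add: proj_def cinner_diff_right orthonormal_cinner_sum subsetD)

lemma proj_orth_sum:
  assumes "orthonormal B" "finite F" "F \<subseteq> B"
  shows "cinner (x - proj F x) (\<Sum>e\<in>F. d e *\<^sub>C e) = 0"
proof -
  have "cinner (x - proj F x) (\<Sum>e\<in>F. d e *\<^sub>C e) = (\<Sum>e\<in>F. d e * cinner (x - proj F x) e)"
    by (simp add: cinner_sum_right cinner_scaleC_right)
  also have "\<dots> = 0"
    using assms proj_orth[OF assms] by (intro sum.neutral) (metis cinner_commute complex_cnj_zero mult_zero_right)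
  finally show ?thesis .
qed

lemma proj_norm:
  assumes "orthonormal B" "finite F" "F \<subseteq> B"
  shows "(norm (x - proj F x))\<^sup>2 = (norm x)\<^sup>2 - (\<Sum>e\<in>F. (cmod (cinner e x))\<^sup>2)"
proof -
  have "x = (x - proj F x) + proj F x" by simp
  then have "(norm x)\<^sup>2 = (norm (x - proj F x))\<^sup>2 + (norm (proj F x))\<^sup>2"
    using pythagoras[OF proj_orth_sum[OF assms, of x "\<lambda>e. cinner e x"]]
    by (metis proj_def)
  moreover have "(norm (proj F x))\<^sup>2 = (\<Sum>e\<in>F. (cmod (cinner e x))\<^sup>2)"
    unfolding proj_def using orthonormal_norm_sum[OF assms] .
  ultimately show ?thesis by simp
qed

lemma proj_best:
  assumes "orthonormal B" "finite F" "F \<subseteq> B"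
  shows "(norm (x - proj F x))\<^sup>2 \<le> (norm (x - (\<Sum>e\<in>F. d e *\<^sub>C e)))\<^sup>2"
proof -
  have "x - (\<Sum>e\<in>F. d e *\<^sub>C e) = (x - proj F x) + (\<Sum>e\<in>F. (cinner e x - d e) *\<^sub>C e)"
    by (simp add: proj_def scaleC_diff_left sum_subtractf)
  then have "(norm (x - (\<Sum>e\<in>F. d e *\<^sub>C e)))\<^sup>2 = (norm (x - proj F x))\<^sup>2 + (norm (\<Sum>e\<in>F. (cinner e x - d e) *\<^sub>C e))\<^sup>2"
    using pythagoras[OF proj_orth_sum[OF assms]] by metis
  then show ?thesis by simp
qed

lemma onb_approx:
  assumes "is_onb B" "\<epsilon> > 0"
  shows "\<exists>F0. finite F0 \<and> F0 \<subseteq> B \<and> (\<forall>F. finite F \<and> F0 \<subseteq> F \<and> F \<subseteq> B \<longrightarrow> (norm (x - proj F x))\<^sup>2 < \<epsilon>)"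
proof -
  have ON: "orthonormal B" using assms onb_orthonormal by blast
  have "x \<in> closure (cspan B)" using assms by (simp add: is_onb_def)
  then obtain y where y: "y \<in> cspan B" "dist y x < sqrt \<epsilon>"
    using assms closure_approachable by (metis real_sqrt_gt_0_iff)
  then obtain G c where G: "finite G" "G \<subseteq> B" "y = (\<Sum>b\<in>G. c b *\<^sub>C b)"
    by (auto simp: cspan_def)
  have "(norm (x - y))\<^sup>2 < \<epsilon>"
    using y(2) assms(2) by (metis dist_commute dist_norm norm_ge_zero real_sqrt_less_iff real_sqrt_unique sqrt_le_D)
  show ?thesis
  proof (intro exI conjI allI impI)
    fix F assume F: "finite F \<and> G \<subseteq> F \<and> F \<subseteq> B"
    have "y = (\<Sum>b\<in>F. (if b \<in> G then c b else 0) *\<^sub>C b)"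
      unfolding G(3) using F by (intro sum.mono_neutral_cong_left) auto
    then have "(norm (x - proj F x))\<^sup>2 \<le> (norm (x - y))\<^sup>2"
      using proj_best[OF ON] F by metis
    then show "(norm (x - proj F x))\<^sup>2 < \<epsilon>" using \<open>(norm (x - y))\<^sup>2 < \<epsilon>\<close> by linarith
  qed (use G in auto)
qed

lemma parseval:
  assumes "is_onb B"
  shows "((\<lambda>e. (cmod (cinner e x))\<^sup>2) has_sum (norm x)\<^sup>2) B"
  unfolding has_sum_def tendsto_iff eventually_finite_subsets_at_top
proof (intro allI impI)
  fix \<epsilon> :: real assume "\<epsilon> > 0"
  from onb_approx[OF assms this, of x] obtain F0 where
    F0: "finite F0" "F0 \<subseteq> B" "\<forall>F. finite F \<and> F0 \<subseteq> F \<and> F \<subseteq> B \<longrightarrow> (norm (x - proj F x))\<^sup>2 < \<epsilon>"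
    by blast
  show "\<exists>X. finite X \<and> X \<subseteq> B \<and> (\<forall>Y. finite Y \<and> X \<subseteq> Y \<and> Y \<subseteq> B \<longrightarrow>
          dist (\<Sum>e\<in>Y. (cmod (cinner e x))\<^sup>2) ((norm x)\<^sup>2) < \<epsilon>)"
  proof (intro exI conjI allI impI)
    fix Y assume Y: "finite Y \<and> F0 \<subseteq> Y \<and> Y \<subseteq> B"
    have "(norm (x - proj Y x))\<^sup>2 = (norm x)\<^sup>2 - (\<Sum>e\<in>Y. (cmod (cinner e x))\<^sup>2)"
      using proj_norm[OF onb_orthonormal[OF assms]] Y by blast
    moreover have "(norm (x - proj Y x))\<^sup>2 \<ge> 0" by simp
    ultimately show "dist (\<Sum>e\<in>Y. (cmod (cinner e x))\<^sup>2) ((norm x)\<^sup>2) < \<epsilon>"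
      using F0(3)[rule_format, of Y] Y by (simp add: dist_real_def)
  qed (use F0 in auto)
qed

lemma expansion:
  assumes "is_onb B"
  shows "((\<lambda>e. cinner e x *\<^sub>C e) has_sum x) B"
  unfolding has_sum_def tendsto_iff eventually_finite_subsets_at_top
proof (intro allI impI)
  fix \<epsilon> :: real assume "\<epsilon> > 0"
  then have "\<epsilon>\<^sup>2 > 0" by simp
  from onb_approx[OF assms this, of x] obtain F0 where
    F0: "finite F0" "F0 \<subseteq> B" "\<forall>F. finite F \<and> F0 \<subseteq> F \<and> F \<subseteq> B \<longrightarrow> (norm (x - proj F x))\<^sup>2 < \<epsilon>\<^sup>2"
    by blast
  show "\<exists>X. finite X \<and> X \<subseteq> B \<and> (\<forall>Y. finite Y \<and> X \<subseteq> Y \<and> Y \<subseteq> B \<longrightarrow>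
          dist (\<Sum>e\<in>Y. cinner e x *\<^sub>C e) x < \<epsilon>)"
  proof (intro exI conjI allI impI)
    fix Y assume Y: "finite Y \<and> F0 \<subseteq> Y \<and> Y \<subseteq> B"
    then have "(norm (x - proj Y x))\<^sup>2 < \<epsilon>\<^sup>2" using F0 by blast
    then have "norm (x - proj Y x) < \<epsilon>" using \<open>\<epsilon> > 0\<close> by (simp add: power_less_imp_less_base)
    then show "dist (\<Sum>e\<in>Y. cinner e x *\<^sub>C e) x < \<epsilon>"
      by (simp add: proj_def dist_norm norm_minus_commute)
  qed (use F0 in auto)
qed



lemma bounded_linear_cinner_right: "bounded_linear (\<lambda>y. cinner (x::'a::complex_inner) y)"
proof (rule bounded_linear_intro[where K="norm x"])
  show "cinner x (y + z) = cinner x y + cinner x z" for y z by (rule cinner_add_right)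
  show "cinner x (r *\<^sub>R y) = r *\<^sub>R cinner x y" for r y by (simp add: cinner_scaleR_right scaleR_conv_of_real)
  show "norm (cinner x y) \<le> norm y * norm x" for y using cauchy_schwarz[of x y] by (simp add: mult.commute)
qed

lemma bounded_linear_cinner_left: "bounded_linear (\<lambda>x. cinner x (y::'a::complex_inner))"
proof (rule bounded_linear_intro[where K="norm y"])
  show "cinner (x + z) y = cinner x y + cinner z y" for x z by (rule cinner_add_left)
  show "cinner (r *\<^sub>R x) y = r *\<^sub>R cinner x y" for r x by (simp add: cinner_scaleR_left scaleR_conv_of_real)
  show "norm (cinner x y) \<le> norm x * norm y" for x using cauchy_schwarz[of x y] by simp
qed

lemma coeff_summable:
  fixes B :: "'a::chilbert_space set"
  assumes ON: "orthonormal B" and sq: "(\<lambda>e. (cmod (c e))\<^sup>2) summable_on B"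
  shows "(\<lambda>e. c e *\<^sub>C e) summable_on B"
proof -
  define f where "f e = c e *\<^sub>C e" for e
  define g where "g e = (cmod (c e))\<^sup>2" for e
  from sq obtain L where lim: "(sum g \<longlongrightarrow> L) (finite_subsets_at_top B)"
    unfolding has_sum_def summable_on_def g_def by blast
  have "\<exists>P. eventually P (finite_subsets_at_top B) \<and>
              (\<forall>F F'. P F \<and> P F' \<longrightarrow> dist (sum f F) (sum f F') < e)" if "e>0" for e
  proof -
    define d P where "d = e\<^sup>2/32" and "P F \<longleftrightarrow> finite F \<and> F \<subseteq> B \<and> dist (sum g F) L < d" for F
    have "d > 0" using that by (simp add: d_def)
    have ev_P: "eventually P (finite_subsets_at_top B)"
      using lim
      by (auto simp add: P_def[abs_def] \<open>0 < d\<close> eventually_conj_iff eventually_finite_subsets_at_top_weakI tendsto_iff)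
    moreover have "dist (sum f F1) (sum f F2) < e" if "P F1" and "P F2" for F1 F2
    proof -
      from ev_P
      obtain F' where "finite F'" and "F' \<subseteq> B" and P_sup_F': "finite F \<and> F \<supseteq> F' \<and> F \<subseteq> B \<Longrightarrow> P F" for F
        by atomize_elim (simp add: eventually_finite_subsets_at_top)
      define F where "F = F' \<union> F1 \<union> F2"
      have "finite F" and "F \<subseteq> B"
        using F_def P_def[abs_def] that \<open>finite F'\<close> \<open>F' \<subseteq> B\<close> by auto
      have dist_F: "dist (sum g F) L < d"
        by (metis F_def \<open>F \<subseteq> B\<close> P_def P_sup_F' \<open>finite F\<close> le_supE order_refl)
      have dist_F_subset: "dist (sum f F) (sum f F') < e/4" if F': "F' \<subseteq> F" "P F'" for F'
      proof -
        have "dist (sum f F) (sum f F') = norm (sum f (F-F'))"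
          unfolding dist_norm using \<open>finite F\<close> F' by (subst sum_diff) auto
        moreover have "(norm (sum f (F-F')))\<^sup>2 = sum g (F - F')"
          unfolding f_def g_def using orthonormal_norm_sum[OF ON] \<open>finite F\<close> \<open>F \<subseteq> B\<close> by blast
        moreover have "sum g (F - F') = dist (sum g F) (sum g F')"
          unfolding dist_norm using \<open>finite F\<close> F' g_def
          by (subst sum_diff) (auto intro!: sum_nonneg abs_of_nonneg[symmetric] simp: sum_diff[symmetric])
        moreover have "dist (sum g F) (sum g F') < 2 * d"
          using dist_F F' unfolding P_def dist_norm real_norm_def by linarith
        ultimately have "(dist (sum f F) (sum f F'))\<^sup>2 < (e/4)\<^sup>2"
          by (simp add: d_def power_divide)
        moreover have "0 \<le> e/4" using \<open>e > 0\<close> by simp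
        ultimately show ?thesis
          by (rule power_less_imp_less_base)
      qed
      have "dist (sum f F1) (sum f F2) \<le> dist (sum f F) (sum f F1) + dist (sum f F) (sum f F2)"
        by (rule dist_triangle3)
      also have "\<dots> < e/4 + e/4"
        by (intro add_strict_mono dist_F_subset that) (auto simp: F_def)
      also have "\<dots> \<le> e" using \<open>e > 0\<close> by simp
      finally show ?thesis .
    qed
    ultimately show ?thesis by blast
  qed
  then have "cauchy_filter (filtermap (sum f) (finite_subsets_at_top B))"
    by (simp add: cauchy_filter_metric_filtermap)
  moreover have "complete (UNIV::'a set)" by (rule complete_UNIV)
  ultimately obtain L' where "(sum f \<longlongrightarrow> L') (finite_subsets_at_top B)"
    using complete_uniform[where S=UNIV] by (force simp add: filterlim_def)
  then have "((\<lambda>e. c e *\<^sub>C e) has_sum L') B" unfolding has_sum_def f_def[abs_def] .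
  then show ?thesis unfolding summable_on_def by blast
qed

lemma adjoint_exists:
  fixes T :: "'a::chilbert_space \<Rightarrow> 'a"
  assumes T: "bounded_clinear T" and B: "is_onb B" and sm: "(\<lambda>e. (norm (T e))\<^sup>2) summable_on B"
  shows "\<exists>S. \<forall>x y. cinner (T x) y = cinner x (S y)"
proof -
  have blT: "bounded_linear T" and clT: "\<And>c x. T (c *\<^sub>C x) = c *\<^sub>C T x"
    using T by (auto simp: bounded_clinear_def)
  define S where "S y = infsum (\<lambda>e. cinner (T e) y *\<^sub>C e) B" for y
  have hsS: "((\<lambda>e. cinner (T e) y *\<^sub>C e) has_sum S y) B" for y
  proof -
    have "(\<lambda>e. (norm y)\<^sup>2 * (norm (T e))\<^sup>2) summable_on B"
      using sm by (rule summable_on_cmult_right)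
    then have "(\<lambda>e. (cmod (cinner (T e) y))\<^sup>2) summable_on B"
    proof (rule summable_on_comparison_test)
      fix e show "(cmod (cinner (T e) y))\<^sup>2 \<le> (norm y)\<^sup>2 * (norm (T e))\<^sup>2"
        using cauchy_schwarz[of "T e" y]
        by (metis mult.commute norm_ge_zero power_mono power_mult_distrib)
    qed simp
    then have "(\<lambda>e. cinner (T e) y *\<^sub>C e) summable_on B"
      by (rule coeff_summable[OF onb_orthonormal[OF B]])
    then show ?thesis by (simp add: S_def)
  qed
  have "cinner (T x) y = cinner x (S y)" for x y
  proof -
    have h1: "((\<lambda>e. cinner x (cinner (T e) y *\<^sub>C e)) has_sum cinner x (S y)) B"
      by (rule has_sum_bounded_linear[OF bounded_linear_cinner_right hsS])
    have "((\<lambda>e. T (cinner e x *\<^sub>C e)) has_sum T x) B"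
      by (rule has_sum_bounded_linear[OF blT expansion[OF B]])
    then have "((\<lambda>e. cinner (T (cinner e x *\<^sub>C e)) y) has_sum cinner (T x) y) B"
      by (rule has_sum_bounded_linear[OF bounded_linear_cinner_left])
    moreover have "cinner (T (cinner e x *\<^sub>C e)) y = cinner x (cinner (T e) y *\<^sub>C e)" for e
      by (simp add: clT cinner_scaleC_left cinner_scaleC_right mult.commute flip: cinner_commute)
    ultimately have "((\<lambda>e. cinner x (cinner (T e) y *\<^sub>C e)) has_sum cinner (T x) y) B"
      by simp
    with h1 show ?thesis using has_sum_unique by blast
  qed
  then show ?thesis by blast
qed

lemma adj_prop:
  fixes T :: "'a::chilbert_space \<Rightarrow> 'a"
  assumes "bounded_clinear T" "is_onb B" "(\<lambda>e. (norm (T e))\<^sup>2) summable_on B"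
  shows "cinner (T x) y = cinner x (adj T y)"
proof -
  from adjoint_exists[OF assms] have "\<exists>S. \<forall>x y. cinner (T x) y = cinner x (S y)" .
  then have "\<forall>x y. cinner (T x) y = cinner x (adj T y)"
    unfolding adj_def by (rule someI_ex)
  then show ?thesis by blast
qed



lemma swap_hs:
  fixes T S :: "'a::complex_inner \<Rightarrow> 'a"
  assumes A: "is_onb A" and C: "is_onb C" and adj: "\<And>x y. cinner (T x) y = cinner x (S y)"
    and hs: "((\<lambda>e. (norm (T e))\<^sup>2) has_sum s) A"
  shows "((\<lambda>f. (norm (S f))\<^sup>2) has_sum s) C"
proof -
  define h where "h p = (cmod (cinner (snd p) (T (fst p))))\<^sup>2" for p
  have inner1: "((\<lambda>f. h (e, f)) has_sum (norm (T e))\<^sup>2) C" if "e \<in> A" for e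
    unfolding h_def using parseval[OF C, of "T e"] by simp
  have "h summable_on Sigma A (\<lambda>_. C)"
    by (rule summable_on_SigmaI[OF inner1]) (use hs in \<open>auto simp: h_def summable_on_def\<close>)
  then obtain t where t: "(h has_sum t) (A \<times> C)" by (auto simp: summable_on_def)
  have "((\<lambda>e. (norm (T e))\<^sup>2) has_sum t) A"
    by (rule has_sum_SigmaD[OF t inner1])
  then have "t = s" using hs by (rule has_sum_unique)
  with t have "(h has_sum s) (A \<times> C)" by simp
  then have sw: "((\<lambda>(x,y). h (y,x)) has_sum s) (C \<times> A)" by (rule iffD1[OF has_sum_swap])
  have inner2: "((\<lambda>e. (\<lambda>(x,y). h (y,x)) (f, e)) has_sum (norm (S f))\<^sup>2) A" if "f \<in> C" for f
  proof -
    have "h (e, f) = (cmod (cinner e (S f)))\<^sup>2" for e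
      unfolding h_def by (simp add: adj[symmetric]) (metis cinner_commute complex_mod_cnj)
    then show ?thesis using parseval[OF A, of "S f"] by simp
  qed
  show ?thesis by (rule has_sum_SigmaD[OF sw inner2])
qed



lemma hs_facts:
  fixes T :: "'a::chilbert_space \<Rightarrow> 'a"
  assumes "hilbert_schmidt T"
  shows hs_onb: "is_onb (some_onb :: 'a set)"
    and hs_adj: "\<And>x y. cinner (T x) y = cinner x (adj T y)"
    and hs_adj': "\<And>x y. cinner (adj T x) y = cinner x (T y)"
    and hs_clin: "\<And>c x. T (c *\<^sub>C x) = c *\<^sub>C T x"
    and hs_sum: "((\<lambda>e. (norm (T e))\<^sup>2) has_sum (hs_norm T)\<^sup>2) some_onb"
    and hs_sum_adj: "((\<lambda>e. (norm (adj T e))\<^sup>2) has_sum (hs_norm T)\<^sup>2) some_onb"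
proof -
  from assms obtain B where T: "bounded_clinear T" and B: "is_onb B"
    and sm: "(\<lambda>e. (norm (T e))\<^sup>2) summable_on B"
    by (auto simp: hilbert_schmidt_def)
  show onb: "is_onb (some_onb :: 'a set)"
    unfolding some_onb_def using B by (rule someI)
  show adj: "cinner (T x) y = cinner x (adj T y)" for x y
    by (rule adj_prop[OF T B sm])
  show adj': "cinner (adj T x) y = cinner x (T y)" for x y
    by (metis adj cinner_commute)
  show "T (c *\<^sub>C x) = c *\<^sub>C T x" for c x using T by (simp add: bounded_clinear_def)
  define s where "s = infsum (\<lambda>e. (norm (T e))\<^sup>2) B"
  have hsB: "((\<lambda>e. (norm (T e))\<^sup>2) has_sum s) B" using sm by (simp add: s_def)
  have s0: "s \<ge> 0" using hsB by (rule has_sum_nonneg) simp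
  have h1: "((\<lambda>e. (norm (adj T e))\<^sup>2) has_sum s) some_onb"
    by (rule swap_hs[OF B onb adj hsB])
  have h2: "((\<lambda>e. (norm (T e))\<^sup>2) has_sum s) some_onb"
    by (rule swap_hs[OF onb onb adj' h1])
  have "(hs_norm T)\<^sup>2 = s"
    unfolding hs_norm_def using infsumI[OF h2] s0 by simp
  then show "((\<lambda>e. (norm (T e))\<^sup>2) has_sum (hs_norm T)\<^sup>2) some_onb"
    and "((\<lambda>e. (norm (adj T e))\<^sup>2) has_sum (hs_norm T)\<^sup>2) some_onb"
    using h1 h2 by simp_all
qed

lemma hs_bound_gen:
  fixes T S :: "'a::complex_inner \<Rightarrow> 'a"
  assumes B: "is_onb B" and adj: "\<And>x y. cinner (S x) y = cinner x (T y)"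
    and hs: "((\<lambda>e. (norm (S e))\<^sup>2) has_sum N) B"
  shows "(norm (T x))\<^sup>2 \<le> N * (norm x)\<^sup>2"
proof -
  have p: "((\<lambda>f. (cmod (cinner f (T x)))\<^sup>2) has_sum (norm (T x))\<^sup>2) B"
    by (rule parseval[OF B])
  have q: "((\<lambda>f. (norm x)\<^sup>2 * (norm (S f))\<^sup>2) has_sum (norm x)\<^sup>2 * N) B"
    by (rule has_sum_cmult_right[OF hs])
  have "(norm (T x))\<^sup>2 \<le> (norm x)\<^sup>2 * N"
  proof (rule has_sum_mono[OF p q])
    fix f
    have "cmod (cinner f (T x)) \<le> norm (S f) * norm x"
      using cauchy_schwarz[of "S f" x] by (simp add: adj)
    then show "(cmod (cinner f (T x)))\<^sup>2 \<le> (norm x)\<^sup>2 * (norm (S f))\<^sup>2"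
      by (metis mult.commute norm_ge_zero power_mono power_mult_distrib)
  qed
  then show ?thesis by (simp add: mult.commute)
qed

lemma hs_bounds:
  fixes T :: "'a::chilbert_space \<Rightarrow> 'a"
  assumes "hilbert_schmidt T"
  shows hs_bound: "(norm (T x))\<^sup>2 \<le> (hs_norm T)\<^sup>2 * (norm x)\<^sup>2"
    and hs_bound_adj: "(norm (adj T x))\<^sup>2 \<le> (hs_norm T)\<^sup>2 * (norm x)\<^sup>2"
  by (rule hs_bound_gen[OF hs_onb[OF assms] hs_adj'[OF assms] hs_sum_adj[OF assms]])
     (rule hs_bound_gen[OF hs_onb[OF assms] hs_adj[OF assms] hs_sum[OF assms]])



lemma norm_add_sq_le: "(norm (a + b))\<^sup>2 \<le> 2 * (norm a)\<^sup>2 + 2 * (norm (b::'a::real_normed_vector))\<^sup>2"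
proof -
  have "(norm (a + b))\<^sup>2 \<le> (norm a + norm b)\<^sup>2"
    by (simp add: norm_triangle_ineq power_mono)
  also have "\<dots> \<le> 2 * (norm a)\<^sup>2 + 2 * (norm b)\<^sup>2"
    by (smt (verit) sum_squares_bound power2_sum)
  finally show ?thesis .
qed

lemma part_i_a:
  fixes T :: "'a::chilbert_space \<Rightarrow> 'a"
  assumes hs: "hilbert_schmidt T"
  shows "hs_norm (\<lambda>x. T (adj T x) + adj T (T x)) \<le> 2 * (hs_norm T)\<^sup>2"
proof -
  define N where "N = (hs_norm T)\<^sup>2"
  have N0: "N \<ge> 0" by (simp add: N_def)
  have g: "((\<lambda>e. 2 * N * (norm (adj T e))\<^sup>2 + 2 * N * (norm (T e))\<^sup>2) has_sum (2*N*N + 2*N*N)) some_onb"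
    by (intro has_sum_add has_sum_cmult_right) (use hs_sum[OF hs] hs_sum_adj[OF hs] in \<open>simp_all add: N_def\<close>)
  have le: "(norm (T (adj T e) + adj T (T e)))\<^sup>2 \<le> 2 * N * (norm (adj T e))\<^sup>2 + 2 * N * (norm (T e))\<^sup>2" for e
  proof -
    have "(norm (T (adj T e)))\<^sup>2 \<le> N * (norm (adj T e))\<^sup>2"
      using hs_bound[OF hs] by (simp add: N_def)
    moreover have "(norm (adj T (T e)))\<^sup>2 \<le> N * (norm (T e))\<^sup>2"
      using hs_bound_adj[OF hs] by (simp add: N_def)
    ultimately show ?thesis using norm_add_sq_le[of "T (adj T e)" "adj T (T e)"] by linarith
  qed
  have sm: "(\<lambda>e. (norm (T (adj T e) + adj T (T e)))\<^sup>2) summable_on some_onb"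
    by (rule summable_on_comparison_test[OF has_sum_imp_summable[OF g] le]) simp
  have "infsum (\<lambda>e. (norm (T (adj T e) + adj T (T e)))\<^sup>2) some_onb \<le> 2*N*N + 2*N*N"
    by (rule has_sum_mono[OF has_sum_infsum[OF sm] g le])
  then have "hs_norm (\<lambda>x. T (adj T x) + adj T (T x)) \<le> sqrt ((2 * N)\<^sup>2)"
    unfolding hs_norm_def by (simp add: power2_eq_square algebra_simps)
  also have "sqrt ((2 * N)\<^sup>2) = 2 * N" using N0 by (simp only: real_sqrt_abs abs_of_nonneg mult_nonneg_nonneg zero_le_numeral)
  finally show ?thesis by (simp add: N_def)
qed

lemma trace_sq_abs_summable:
  fixes T :: "'a::chilbert_space \<Rightarrow> 'a"
  assumes hs: "hilbert_schmidt T"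
  shows "(\<lambda>e. norm (cinner e (T (T e)))) summable_on some_onb"
proof -
  have "(\<lambda>e. (norm (adj T e))\<^sup>2 + (norm (T e))\<^sup>2) summable_on some_onb"
    using hs_sum[OF hs] hs_sum_adj[OF hs] by (intro summable_on_add) (auto simp: summable_on_def)
  then show ?thesis
  proof (rule summable_on_comparison_test)
    fix e
    have "norm (cinner e (T (T e))) \<le> norm (adj T e) * norm (T e)"
      using cauchy_schwarz[of "adj T e" "T e"] by (simp add: hs_adj'[OF hs])
    also have "\<dots> \<le> (norm (adj T e))\<^sup>2 + (norm (T e))\<^sup>2"
    proof -
      have "2 * (norm (adj T e) * norm (T e)) \<le> (norm (adj T e))\<^sup>2 + (norm (T e))\<^sup>2"
        using sum_squares_bound[of "norm (adj T e)" "norm (T e)"] by (simp add: mult.assoc)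
      moreover have "0 \<le> norm (adj T e) * norm (T e)" by simp
      ultimately show ?thesis by linarith
    qed
    finally show "norm (cinner e (T (T e))) \<le> (norm (adj T e))\<^sup>2 + (norm (T e))\<^sup>2" .
  qed simp
qed

lemma part_i_b:
  fixes T :: "'a::chilbert_space \<Rightarrow> 'a"
  assumes hs: "hilbert_schmidt T"
  shows "(SUP \<phi>::real. cmod (trace (\<lambda>x.
                (\<lambda>y. exp (\<i> * complex_of_real \<phi>) *\<^sub>C T y)
                  ((\<lambda>y. exp (\<i> * complex_of_real \<phi>) *\<^sub>C T y) x)
              + (\<lambda>y. exp (- \<i> * complex_of_real \<phi>) *\<^sub>C adj T y)
                  ((\<lambda>y. exp (- \<i> * complex_of_real \<phi>) *\<^sub>C adj T y) x))))
         \<le> 2 * cmod (trace (T \<circ> T))"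
proof (rule cSUP_least)
  fix \<phi> :: real
  define c where "c = exp (\<i> * complex_of_real \<phi>)"
  have d: "exp (- \<i> * complex_of_real \<phi>) = cnj c"
    unfolding c_def exp_cnj by simp
  have c1: "cmod c = 1" unfolding c_def by (simp add: norm_exp_i_times)
  define a where "a e = cinner e (T (T e))" for e
  have asum: "a summable_on some_onb"
    unfolding a_def by (rule abs_summable_summable[OF trace_sq_abs_summable[OF hs]])
  have tr: "trace (T \<circ> T) = infsum a some_onb"
    by (simp add: trace_def a_def[abs_def] o_def)
  have pt: "cinner e (c *\<^sub>C T (c *\<^sub>C T e) + cnj c *\<^sub>C adj T (cnj c *\<^sub>C adj T e))
       = c * c * a e + cnj (c * c * a e)" for e
  proof -
    have 1: "cinner e (c *\<^sub>C T (c *\<^sub>C T e)) = c * c * a e"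
      by (simp add: a_def hs_clin[OF hs] cinner_scaleC_right)
    have "cinner e (cnj c *\<^sub>C adj T (cnj c *\<^sub>C adj T e)) = cnj c * cinner (T e) (cnj c *\<^sub>C adj T e)"
      by (simp add: cinner_scaleC_right flip: hs_adj[OF hs])
    also have "\<dots> = cnj c * cnj c * cinner (T e) (adj T e)"
      by (simp add: cinner_scaleC_right)
    also have "cinner (T e) (adj T e) = cnj (a e)"
      unfolding a_def by (metis cinner_commute hs_adj'[OF hs])
    finally have 2: "cinner e (cnj c *\<^sub>C adj T (cnj c *\<^sub>C adj T e)) = cnj (c * c * a e)" by simp
    show ?thesis using 1 2 by (simp add: cinner_add_right)
  qed
  have "trace (\<lambda>x. (\<lambda>y. exp (\<i> * complex_of_real \<phi>) *\<^sub>C T y)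
                  ((\<lambda>y. exp (\<i> * complex_of_real \<phi>) *\<^sub>C T y) x)
              + (\<lambda>y. exp (- \<i> * complex_of_real \<phi>) *\<^sub>C adj T y)
                  ((\<lambda>y. exp (- \<i> * complex_of_real \<phi>) *\<^sub>C adj T y) x))
       = infsum (\<lambda>e. c * c * a e + cnj (c * c * a e)) some_onb"
    unfolding trace_def d c_def[symmetric] using pt by simp
  also have "\<dots> = c * c * infsum a some_onb + cnj (c * c * infsum a some_onb)"
    using asum by (simp add: infsum_add summable_on_cmult_right infsum_cmult_right)
  finally have eq: "trace (\<lambda>x. (\<lambda>y. exp (\<i> * complex_of_real \<phi>) *\<^sub>C T y)
                  ((\<lambda>y. exp (\<i> * complex_of_real \<phi>) *\<^sub>C T y) x)
              + (\<lambda>y. exp (- \<i> * complex_of_real \<phi>) *\<^sub>C adj T y)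
                  ((\<lambda>y. exp (- \<i> * complex_of_real \<phi>) *\<^sub>C adj T y) x))
       = c * c * trace (T \<circ> T) + cnj (c * c * trace (T \<circ> T))" by (simp add: tr)
  have "cmod (c * c * trace (T \<circ> T) + cnj (c * c * trace (T \<circ> T))) \<le> 2 * cmod (trace (T \<circ> T))"
    using norm_triangle_ineq[of "c * c * trace (T \<circ> T)" "cnj (c * c * trace (T \<circ> T))"]
    by (simp add: norm_mult c1)
  then show "cmod (trace (\<lambda>x. (\<lambda>y. exp (\<i> * complex_of_real \<phi>) *\<^sub>C T y)
                  ((\<lambda>y. exp (\<i> * complex_of_real \<phi>) *\<^sub>C T y) x)
              + (\<lambda>y. exp (- \<i> * complex_of_real \<phi>) *\<^sub>C adj T y)
                  ((\<lambda>y. exp (- \<i> * complex_of_real \<phi>) *\<^sub>C adj T y) x))) \<le> 2 * cmod (trace (T \<circ> T))"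
    by (simp only: eq)
qed simp

lemma part_ii_a:
  fixes T S :: "'a::chilbert_space \<Rightarrow> 'a"
  assumes hT: "hilbert_schmidt T" and hS: "hilbert_schmidt S"
  shows "(hs_norm (T \<circ> S))\<^sup>2 \<le> (hs_norm T)\<^sup>2 * (hs_norm S)\<^sup>2"
proof -
  define N where "N = (hs_norm T)\<^sup>2"
  define M where "M = (hs_norm S)\<^sup>2"
  have g: "((\<lambda>e. N * (norm (S e))\<^sup>2) has_sum (N * M)) some_onb"
    unfolding M_def by (rule has_sum_cmult_right[OF hs_sum[OF hS]])
  have le: "(norm (T (S e)))\<^sup>2 \<le> N * (norm (S e))\<^sup>2" for e
    using hs_bound[OF hT] by (simp add: N_def)
  have sm: "(\<lambda>e. (norm (T (S e)))\<^sup>2) summable_on some_onb"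
    by (rule summable_on_comparison_test[OF has_sum_imp_summable[OF g] le]) simp
  have I: "infsum (\<lambda>e. (norm (T (S e)))\<^sup>2) some_onb \<le> N * M"
    by (rule has_sum_mono[OF has_sum_infsum[OF sm] g le])
  have I0: "infsum (\<lambda>e. (norm (T (S e)))\<^sup>2) some_onb \<ge> 0"
    by (rule infsum_nonneg) simp
  have "(hs_norm (T \<circ> S))\<^sup>2 = infsum (\<lambda>e. (norm (T (S e)))\<^sup>2) some_onb"
    unfolding hs_norm_def using I0 by simp
  then show ?thesis using I by (simp add: N_def M_def)
qed

lemma amgm: assumes "l > 0" shows "x * y \<le> (l * x\<^sup>2 + y\<^sup>2 / l) / (2::real)"
proof -
  have "l * x\<^sup>2 + y\<^sup>2 / l - 2 * (x * y) = (l * x - y)\<^sup>2 / l"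
    using assms by (simp add: field_simps power2_eq_square)
  moreover have "(l * x - y)\<^sup>2 / l \<ge> 0" using assms by simp
  ultimately have "2 * (x * y) \<le> l * x\<^sup>2 + y\<^sup>2 / l" by linarith
  then show ?thesis by simp
qed

lemma part_ii_b:
  fixes T S :: "'a::chilbert_space \<Rightarrow> 'a"
  assumes hT: "hilbert_schmidt T" and hS: "hilbert_schmidt S"
  shows "cmod (trace ((T \<circ> S) \<circ> (T \<circ> S))) \<le> (hs_norm T)\<^sup>2 * (hs_norm S)\<^sup>2"
proof -
  define N where "N = (hs_norm T)\<^sup>2"
  define M where "M = (hs_norm S)\<^sup>2"
  have N0: "N \<ge> 0" and M0: "M \<ge> 0" by (simp_all add: N_def M_def)
  define K where "K = sqrt M * sqrt N"
  define b where "b e = cinner e (T (S (T (S e))))" for e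
  have tr: "trace ((T \<circ> S) \<circ> (T \<circ> S)) = infsum b some_onb"
    by (simp add: trace_def b_def[abs_def] o_def)
  have bb: "norm (b e) \<le> K * (norm (adj T e) * norm (S e))" for e
  proof -
    have "b e = cinner (adj T e) (S (T (S e)))"
      unfolding b_def by (simp add: hs_adj'[OF hT])
    then have "norm (b e) \<le> norm (adj T e) * norm (S (T (S e)))"
      using cauchy_schwarz by simp
    moreover have "norm (S (T (S e))) \<le> K * norm (S e)"
    proof -
      have "(norm (S (T (S e))))\<^sup>2 \<le> M * (norm (T (S e)))\<^sup>2"
        using hs_bound[OF hS] by (simp add: M_def)
      also have "\<dots> \<le> M * (N * (norm (S e))\<^sup>2)"
        using hs_bound[OF hT] M0 by (simp add: N_def mult_left_mono)
      also have "\<dots> = (K * norm (S e))\<^sup>2"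
        using M0 N0 by (simp add: K_def power_mult_distrib)
      finally show ?thesis
        by (rule power2_le_imp_le) (simp add: K_def M0 N0)
    qed
    ultimately show ?thesis
      by (smt (verit, best) mult.commute mult.left_commute mult_left_mono norm_ge_zero)
  qed
  show ?thesis
  proof (cases "K = 0")
    case True
    then have "b e = 0" for e using bb[of e] by simp
    then have "b = (\<lambda>_. 0)" by auto
    then have "trace ((T \<circ> S) \<circ> (T \<circ> S)) = 0" unfolding tr by simp
    then show ?thesis using N0 M0 by simp
  next
    case False
    then have Mp: "M > 0" and Np: "N > 0" using M0 N0 by (auto simp: K_def)
    define l where "l = sqrt M / sqrt N"
    have lp: "l > 0" using Mp Np by (simp add: l_def)
    have g: "((\<lambda>e. K * ((l * (norm (adj T e))\<^sup>2 + (norm (S e))\<^sup>2 / l) / 2)) has_sum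
               (K * ((l * N + M / l) / 2))) some_onb"
      by (intro has_sum_cmult_right has_sum_divide_const has_sum_add)
         (use hs_sum_adj[OF hT] hs_sum[OF hS] in \<open>simp_all add: N_def M_def divide_inverse has_sum_cmult_left\<close>)
    have le: "norm (b e) \<le> K * ((l * (norm (adj T e))\<^sup>2 + (norm (S e))\<^sup>2 / l) / 2)" for e
      using bb[of e] amgm[OF lp, of "norm (adj T e)" "norm (S e)"]
      by (smt (verit, best) K_def mult_left_mono real_sqrt_ge_zero mult_nonneg_nonneg M0 N0)
    have sm: "(\<lambda>e. norm (b e)) summable_on some_onb"
      by (rule summable_on_comparison_test[OF has_sum_imp_summable[OF g] le]) simp
    have "norm (infsum b some_onb) \<le> infsum (\<lambda>e. norm (b e)) some_onb"
      by (rule norm_infsum_bound[OF sm])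
    also have "\<dots> \<le> K * ((l * N + M / l) / 2)"
      by (rule has_sum_mono[OF has_sum_infsum[OF sm] g le])
    also have "K * ((l * N + M / l) / 2) = M * N"
      using Mp Np unfolding K_def l_def
      by (simp add: field_simps power2_eq_square[symmetric])
    finally show ?thesis using tr by (simp add: N_def M_def mult.commute)
  qed
qed


theorem corollary3p7:
  fixes T S :: "'a::chilbert_space \<Rightarrow> 'a"
  assumes "hilbert_schmidt T" and "hilbert_schmidt S"
  shows "(hs_norm (\<lambda>x. T (adj T x) + adj T (T x))
           + (SUP \<phi>::real. cmod (trace (\<lambda>x.
                (\<lambda>y. exp (\<i> * complex_of_real \<phi>) *\<^sub>C T y)
                  ((\<lambda>y. exp (\<i> * complex_of_real \<phi>) *\<^sub>C T y) x)
              + (\<lambda>y. exp (- \<i> * complex_of_real \<phi>) *\<^sub>C adj T y)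
                  ((\<lambda>y. exp (- \<i> * complex_of_real \<phi>) *\<^sub>C adj T y) x))))
         \<le> 2 * ((hs_norm T)\<^sup>2 + cmod (trace (T \<circ> T))))
       \<and> ((hs_norm (T \<circ> S))\<^sup>2 + cmod (trace ((T \<circ> S) \<circ> (T \<circ> S)))
         \<le> 4 * min ((hs_norm T)\<^sup>2 * ((hs_norm S)\<^sup>2 + cmod (trace (S \<circ> S))))
                   ((hs_norm S)\<^sup>2 * ((hs_norm T)\<^sup>2 + cmod (trace (T \<circ> T)))))"
  proof -
  define N where "N = (hs_norm T)\<^sup>2"
  define M where "M = (hs_norm S)\<^sup>2"
  have N0: "N \<ge> 0" and M0: "M \<ge> 0" by (simp_all add: N_def M_def)
  note i1 = part_i_a[OF assms(1)] and i2 = part_i_b[OF assms(1)]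
  have ii1: "(hs_norm (T \<circ> S))\<^sup>2 \<le> N * M" using part_ii_a[OF assms] by (simp add: N_def M_def)
  have ii2: "cmod (trace ((T \<circ> S) \<circ> (T \<circ> S))) \<le> N * M" using part_ii_b[OF assms] by (simp add: N_def M_def)
  have m1: "N * M \<le> N * (M + cmod (trace (S \<circ> S)))" using N0 by (simp add: mult_left_mono)
  have m2: "N * M \<le> M * (N + cmod (trace (T \<circ> T)))" using M0 by (simp add: mult_left_mono mult.commute)
  have "N * M \<ge> 0" using N0 M0 by simp
  then have ii: "(hs_norm (T \<circ> S))\<^sup>2 + cmod (trace ((T \<circ> S) \<circ> (T \<circ> S)))
      \<le> 4 * min (N * (M + cmod (trace (S \<circ> S)))) (M * (N + cmod (trace (T \<circ> T))))"
    using ii1 ii2 m1 m2 by linarith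
  show ?thesis
  proof (rule conjI)
    show "hs_norm (\<lambda>x. T (adj T x) + adj T (T x))
           + (SUP \<phi>::real. cmod (trace (\<lambda>x.
                (\<lambda>y. exp (\<i> * complex_of_real \<phi>) *\<^sub>C T y)
                  ((\<lambda>y. exp (\<i> * complex_of_real \<phi>) *\<^sub>C T y) x)
              + (\<lambda>y. exp (- \<i> * complex_of_real \<phi>) *\<^sub>C adj T y)
                  ((\<lambda>y. exp (- \<i> * complex_of_real \<phi>) *\<^sub>C adj T y) x))))
         \<le> 2 * ((hs_norm T)\<^sup>2 + cmod (trace (T \<circ> T)))"
      using add_mono[OF i1 i2] by (simp add: distrib_left)
    show "(hs_norm (T \<circ> S))\<^sup>2 + cmod (trace ((T \<circ> S) \<circ> (T \<circ> S)))
         \<le> 4 * min ((hs_norm T)\<^sup>2 * ((hs_norm S)\<^sup>2 + cmod (trace (S \<circ> S))))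
                   ((hs_norm S)\<^sup>2 * ((hs_norm T)\<^sup>2 + cmod (trace (T \<circ> T))))"
      using ii by (simp only: N_def M_def)
  qed
qed

end
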